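(* Let $R$ be a right or left Noetherian ring that is finitely presented (as a ring, or as an algebra over a fixed commutative base). Then every homomorphic image of $R$ is also finitely presented (in the same sense).
   Context: A ring (resp. algebra) is finitely presented if it is isomorphic to a free ring (resp. free algebra) on finitely many generators modulo a two-sided ideal generated by finitely many elements. *)

theory Defs
  imports "HOL-Algebra.QuotRing" "HOL-Algebra.IntRing"
begin

text \<open>The free associative unital algebra over a commutative ring K on the
  n generators x_0, ..., x_{n-1}: finitely supported K-valued functions on
  words (lists of generator indices below n), with convolution product.
  For K = the integers this is the free ring on n generators.\<close>

definition free_alg :: "('k, 'm) ring_scheme \<Rightarrow> nat \<Rightarrow> (nat list \<Rightarrow> 'k) ring" where
  "free_alg K n =
     \<lparr> carrier = {f. (\<forall>w. f w \<in> carrier K)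
                    \<and> finite {w. f w \<noteq> \<zero>\<^bsub>K\<^esub>}
                    \<and> (\<forall>w. f w \<noteq> \<zero>\<^bsub>K\<^esub> \<longrightarrow> set w \<subseteq> {..<n})},
       mult = (\<lambda>f g w. finsum K (\<lambda>i. f (take i w) \<otimes>\<^bsub>K\<^esub> g (drop i w)) {..length w}),
       one = (\<lambda>w. if w = [] then \<one>\<^bsub>K\<^esub> else \<zero>\<^bsub>K\<^esub>),
       zero = (\<lambda>w. \<zero>\<^bsub>K\<^esub>),
       add = (\<lambda>f g w. f w \<oplus>\<^bsub>K\<^esub> g w) \<rparr>"

definition free_const :: "('k, 'm) ring_scheme \<Rightarrow> 'k \<Rightarrow> (nat list \<Rightarrow> 'k)" where
  "free_const K c = (\<lambda>w. if w = [] then c else \<zero>\<^bsub>K\<^esub>)"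

definition fp_ring :: "('a, 'b) ring_scheme \<Rightarrow> bool" where
  "fp_ring R \<longleftrightarrow> (\<exists>n Rel. finite Rel \<and> Rel \<subseteq> carrier (free_alg \<Z> n) \<and>
      R \<simeq> (free_alg \<Z> n Quot genideal (free_alg \<Z> n) Rel))"

definition fp_alg :: "('k, 'm) ring_scheme \<Rightarrow> ('a, 'b) ring_scheme \<Rightarrow> ('k \<Rightarrow> 'a) \<Rightarrow> bool" where
  "fp_alg K R \<iota> \<longleftrightarrow> (\<exists>n Rel. finite Rel \<and> Rel \<subseteq> carrier (free_alg K n) \<and>
      (\<exists>h \<in> ring_iso R (free_alg K n Quot genideal (free_alg K n) Rel).
         \<forall>c \<in> carrier K. h (\<iota> c) = genideal (free_alg K n) Rel +>\<^bsub>free_alg K n\<^esub> free_const K c))"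

definition is_algebra :: "('k, 'm) ring_scheme \<Rightarrow> ('a, 'b) ring_scheme \<Rightarrow> ('k \<Rightarrow> 'a) \<Rightarrow> bool" where
  "is_algebra K R \<iota> \<longleftrightarrow> cring K \<and> ring R \<and> \<iota> \<in> ring_hom K R \<and>
      (\<forall>c \<in> carrier K. \<forall>x \<in> carrier R. \<iota> c \<otimes>\<^bsub>R\<^esub> x = x \<otimes>\<^bsub>R\<^esub> \<iota> c)"

definition left_ideal :: "'a set \<Rightarrow> ('a, 'b) ring_scheme \<Rightarrow> bool" where
  "left_ideal I R \<longleftrightarrow> additive_subgroup I R \<and>
      (\<forall>r \<in> carrier R. \<forall>x \<in> I. r \<otimes>\<^bsub>R\<^esub> x \<in> I)"

definition right_ideal :: "'a set \<Rightarrow> ('a, 'b) ring_scheme \<Rightarrow> bool" where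
  "right_ideal I R \<longleftrightarrow> additive_subgroup I R \<and>
      (\<forall>r \<in> carrier R. \<forall>x \<in> I. x \<otimes>\<^bsub>R\<^esub> r \<in> I)"

definition left_noetherian :: "('a, 'b) ring_scheme \<Rightarrow> bool" where
  "left_noetherian R \<longleftrightarrow> ring R \<and>
     (\<forall>I :: nat \<Rightarrow> 'a set. (\<forall>k. left_ideal (I k) R) \<and> (\<forall>k. I k \<subseteq> I (Suc k))
        \<longrightarrow> (\<exists>N. \<forall>k\<ge>N. I k = I N))"

definition right_noetherian :: "('a, 'b) ring_scheme \<Rightarrow> bool" where
  "right_noetherian R \<longleftrightarrow> ring R \<and>
     (\<forall>I :: nat \<Rightarrow> 'a set. (\<forall>k. right_ideal (I k) R) \<and> (\<forall>k. I k \<subseteq> I (Suc k))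
        \<longrightarrow> (\<exists>N. \<forall>k\<ge>N. I k = I N))"

end

theory Submission
  imports Defs
begin

context ring begin

lemma dsum_swap:
  fixes N :: nat
  assumes T: "\<And>j i. T j i \<in> carrier R"
  shows "(\<Oplus>i\<in>{..N}. \<Oplus>j\<in>{..i}. T j i) = (\<Oplus>j\<in>{..N}. \<Oplus>k\<in>{..N - j}. T j (j + k))"
proof (induct N)
  case 0 then show ?case using T by (simp add: Pi_def)
next
  case (Suc N)
  have "(\<Oplus>j\<in>{..Suc N}. \<Oplus>k\<in>{..Suc N - j}. T j (j + k))
     = (\<Oplus>j\<in>{..N}. (\<Oplus>k\<in>{..N - j}. T j (j + k)) \<oplus> T j (Suc N)) \<oplus> T (Suc N) (Suc N)"
    using T by (simp cong: finsum_cong add: Suc_diff_le Pi_def a_ac)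
  also have "\<dots> = (\<Oplus>j\<in>{..N}. \<Oplus>k\<in>{..N - j}. T j (j + k)) \<oplus> (\<Oplus>j\<in>{..N}. T j (Suc N)) \<oplus> T (Suc N) (Suc N)"
    using T by (simp add: finsum_addf Pi_def)
  finally show ?case using T Suc by (simp add: Pi_def a_ac)
qed

end


context ring begin

abbreviation "FA n \<equiv> free_alg R n"

lemma fa_carrier: "f \<in> carrier (FA n) \<longleftrightarrow> (\<forall>w. f w \<in> carrier R) \<and> finite {w. f w \<noteq> \<zero>}
   \<and> (\<forall>w. f w \<noteq> \<zero> \<longrightarrow> set w \<subseteq> {..<n})"
  by (simp add: free_alg_def)

lemma fa_mult: "f \<otimes>\<^bsub>FA n\<^esub> g = (\<lambda>w. \<Oplus>i\<in>{..length w}. f (take i w) \<otimes> g (drop i w))"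
  by (simp add: free_alg_def)
lemma fa_add: "f \<oplus>\<^bsub>FA n\<^esub> g = (\<lambda>w. f w \<oplus> g w)"
  by (simp add: free_alg_def)
lemma fa_zero: "\<zero>\<^bsub>FA n\<^esub> = (\<lambda>w. \<zero>)"
  by (simp add: free_alg_def)
lemma fa_one: "\<one>\<^bsub>FA n\<^esub> = (\<lambda>w. if w = [] then \<one> else \<zero>)"
  by (simp add: free_alg_def)

lemma fa_carrierD: "f \<in> carrier (FA n) \<Longrightarrow> f w \<in> carrier R"
  by (simp add: fa_carrier)

lemma fa_add_closed:
  assumes f: "f \<in> carrier (FA n)" and g: "g \<in> carrier (FA n)"
  shows "f \<oplus>\<^bsub>FA n\<^esub> g \<in> carrier (FA n)"
proof -
  have "{w. f w \<oplus> g w \<noteq> \<zero>} \<subseteq> {w. f w \<noteq> \<zero>} \<union> {w. g w \<noteq> \<zero>}"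
    using f g by (auto simp: fa_carrier)
  moreover have "finite ({w. f w \<noteq> \<zero>} \<union> {w. g w \<noteq> \<zero>})" using f g by (simp add: fa_carrier)
  ultimately have fin: "finite {w. f w \<oplus> g w \<noteq> \<zero>}" by (rule finite_subset)
  have fc: "\<And>w. f w \<in> carrier R" and gc: "\<And>w. g w \<in> carrier R" using f g by (auto simp: fa_carrier)
  show ?thesis unfolding fa_add fa_carrier
  proof (intro conjI allI impI fin)
    fix w show "f w \<oplus> g w \<in> carrier R" using fc gc by simp
  next
    fix w assume "f w \<oplus> g w \<noteq> \<zero>"
    then have "f w \<noteq> \<zero> \<or> g w \<noteq> \<zero>" using fc gc by auto
    then show "set w \<subseteq> {..<n}" using f g by (auto simp: fa_carrier)
  qed
qed

lemma fa_neg_closed: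
  assumes f: "f \<in> carrier (FA n)"
  shows "(\<lambda>w. \<ominus> f w) \<in> carrier (FA n)"
proof -
  have "{w. \<ominus> f w \<noteq> \<zero>} = {w. f w \<noteq> \<zero>}"
    using f by (auto simp: fa_carrier)
  then show ?thesis using f unfolding fa_carrier by auto
qed

lemma fa_one_closed: "\<one>\<^bsub>FA n\<^esub> \<in> carrier (FA n)"
proof -
  have "{w. (if w = [] then \<one> else \<zero>) \<noteq> \<zero>} \<subseteq> {[]}" by auto
  then show ?thesis unfolding fa_one fa_carrier by (auto intro: finite_subset)
qed

lemma fa_zero_closed: "\<zero>\<^bsub>FA n\<^esub> \<in> carrier (FA n)"
  unfolding fa_zero fa_carrier by auto

lemma fa_mult_closed:
  assumes f: "f \<in> carrier (FA n)" and g: "g \<in> carrier (FA n)"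
  shows "f \<otimes>\<^bsub>FA n\<^esub> g \<in> carrier (FA n)"
proof -
  let ?h = "\<lambda>w. \<Oplus>i\<in>{..length w}. f (take i w) \<otimes> g (drop i w)"
  have fc: "\<And>w. f w \<in> carrier R" and gc: "\<And>w. g w \<in> carrier R" using f g by (auto simp: fa_carrier)
  have nz: "\<exists>i. f (take i w) \<noteq> \<zero> \<and> g (drop i w) \<noteq> \<zero>" if "?h w \<noteq> \<zero>" for w
  proof (rule ccontr)
    assume "\<not> ?thesis"
    then have "\<And>i. f (take i w) \<otimes> g (drop i w) = \<zero>" using fc gc by (metis l_null r_null)
    then have "?h w = (\<Oplus>i\<in>{..length w}. \<zero>)" by (intro finsum_cong) auto
    then show False using that by simp
  qed
  have "{w. ?h w \<noteq> \<zero>} \<subseteq> (\<lambda>(u,v). u @ v) ` ({w. f w \<noteq> \<zero>} \<times> {w. g w \<noteq> \<zero>})"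
  proof
    fix w assume "w \<in> {w. ?h w \<noteq> \<zero>}"
    then obtain i where "f (take i w) \<noteq> \<zero>" "g (drop i w) \<noteq> \<zero>" using nz by blast
    then show "w \<in> (\<lambda>(u,v). u @ v) ` ({w. f w \<noteq> \<zero>} \<times> {w. g w \<noteq> \<zero>})"
      by (auto intro!: image_eqI[of _ _ "(take i w, drop i w)"])
  qed
  moreover have "finite ((\<lambda>(u,v). u @ v) ` ({w. f w \<noteq> \<zero>} \<times> {w. g w \<noteq> \<zero>}))"
    using f g by (simp add: fa_carrier)
  moreover have "set w \<subseteq> {..<n}" if hw: "?h w \<noteq> \<zero>" for w
  proof -
    obtain i where "f (take i w) \<noteq> \<zero>" "g (drop i w) \<noteq> \<zero>" using nz hw by blast
    then have "set (take i w) \<subseteq> {..<n}" "set (drop i w) \<subseteq> {..<n}" using f g by (auto simp: fa_carrier)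
    then show ?thesis by (metis append_take_drop_id set_append Un_subset_iff)
  qed
  ultimately show ?thesis unfolding fa_mult fa_carrier using fc gc
    by (auto intro: finite_subset simp: Pi_def)
qed

lemma fa_mult_assoc:
  assumes f: "f \<in> carrier (FA n)" and g: "g \<in> carrier (FA n)" and h: "h \<in> carrier (FA n)"
  shows "(f \<otimes>\<^bsub>FA n\<^esub> g) \<otimes>\<^bsub>FA n\<^esub> h = f \<otimes>\<^bsub>FA n\<^esub> (g \<otimes>\<^bsub>FA n\<^esub> h)"
proof
  fix w :: "nat list"
  have fc: "\<And>w. f w \<in> carrier R" and gc: "\<And>w. g w \<in> carrier R" and hc: "\<And>w. h w \<in> carrier R"
    using f g h by (auto simp: fa_carrier)
  define N where "N = length w"
  define T where "T = (\<lambda>j i. (f (take j w) \<otimes> g (drop j (take i w))) \<otimes> h (drop i w))"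
  have Tc: "\<And>j i. T j i \<in> carrier R" unfolding T_def using fc gc hc by auto
  have eq1: "(\<Oplus>j\<in>{..length (take i w)}. f (take j (take i w)) \<otimes> g (drop j (take i w))) \<otimes> h (drop i w)
       = (\<Oplus>j\<in>{..i}. T j i)" if "i \<in> {..N}" for i
  proof -
    from that have il: "length (take i w) = i" by (simp add: N_def)
    have "(\<Oplus>j\<in>{..length (take i w)}. f (take j (take i w)) \<otimes> g (drop j (take i w)))
        = (\<Oplus>j\<in>{..i}. f (take j w) \<otimes> g (drop j (take i w)))"
      unfolding il by (intro finsum_cong) (auto simp: fc gc min_def)
    moreover have "(\<Oplus>j\<in>{..i}. f (take j w) \<otimes> g (drop j (take i w))) \<otimes> h (drop i w) = (\<Oplus>j\<in>{..i}. T j i)"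
      unfolding T_def by (rule finsum_ldistr) (auto simp: fc gc hc)
    ultimately show ?thesis by simp
  qed
  have "((f \<otimes>\<^bsub>FA n\<^esub> g) \<otimes>\<^bsub>FA n\<^esub> h) w = (\<Oplus>i\<in>{..N}. \<Oplus>j\<in>{..i}. T j i)"
    unfolding fa_mult N_def[symmetric]
  proof (rule add.finprod_cong'[OF refl])
    show "(\<lambda>i. \<Oplus>j\<in>{..i}. T j i) \<in> {..N} \<rightarrow> carrier R" using Tc by (auto intro: finsum_closed)
  next
    fix i assume "i \<in> {..N}" then show "(\<Oplus>j\<in>{..length (take i w)}. f (take j (take i w)) \<otimes> g (drop j (take i w))) \<otimes> h (drop i w)
       = (\<Oplus>j\<in>{..i}. T j i)" by (rule eq1)
  qed
  also have "\<dots> = (\<Oplus>j\<in>{..N}. \<Oplus>k\<in>{..N - j}. T j (j + k))"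
    by (rule dsum_swap[OF Tc])
  also have "\<dots> = (f \<otimes>\<^bsub>FA n\<^esub> (g \<otimes>\<^bsub>FA n\<^esub> h)) w"
    unfolding fa_mult N_def T_def
    by (intro finsum_cong) (auto simp: finsum_rdistr fc gc hc Pi_def m_assoc take_drop add.commute)
  finally show "((f \<otimes>\<^bsub>FA n\<^esub> g) \<otimes>\<^bsub>FA n\<^esub> h) w = (f \<otimes>\<^bsub>FA n\<^esub> (g \<otimes>\<^bsub>FA n\<^esub> h)) w" .
qed

end


context ring begin

lemma fa_l_one:
  assumes f: "f \<in> carrier (FA n)"
  shows "\<one>\<^bsub>FA n\<^esub> \<otimes>\<^bsub>FA n\<^esub> f = f"
proof
  fix w :: "nat list"
  have fc: "\<And>w. f w \<in> carrier R" using f by (auto simp: fa_carrier)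
  have "(\<one>\<^bsub>FA n\<^esub> \<otimes>\<^bsub>FA n\<^esub> f) w = (\<Oplus>i\<in>{..length w}. if 0 = i then f (drop i w) else \<zero>)"
    unfolding fa_mult fa_one by (intro finsum_cong) (auto simp: fc simp_implies_def)
  also have "\<dots> = f (drop 0 w)"
    by (rule add.finprod_singleton) (auto simp: fc)
  finally show "(\<one>\<^bsub>FA n\<^esub> \<otimes>\<^bsub>FA n\<^esub> f) w = f w" by simp
qed

lemma fa_r_one:
  assumes f: "f \<in> carrier (FA n)"
  shows "f \<otimes>\<^bsub>FA n\<^esub> \<one>\<^bsub>FA n\<^esub> = f"
proof
  fix w :: "nat list"
  have fc: "\<And>w. f w \<in> carrier R" using f by (auto simp: fa_carrier)
  have "(f \<otimes>\<^bsub>FA n\<^esub> \<one>\<^bsub>FA n\<^esub>) w = (\<Oplus>i\<in>{..length w}. if length w = i then f (take i w) else \<zero>)"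
    unfolding fa_mult fa_one by (intro finsum_cong) (auto simp: fc simp_implies_def)
  also have "\<dots> = f (take (length w) w)"
    by (rule add.finprod_singleton) (auto simp: fc)
  finally show "(f \<otimes>\<^bsub>FA n\<^esub> \<one>\<^bsub>FA n\<^esub>) w = f w" by simp
qed

lemma fa_l_distr:
  assumes f: "f \<in> carrier (FA n)" and g: "g \<in> carrier (FA n)" and h: "h \<in> carrier (FA n)"
  shows "(f \<oplus>\<^bsub>FA n\<^esub> g) \<otimes>\<^bsub>FA n\<^esub> h = f \<otimes>\<^bsub>FA n\<^esub> h \<oplus>\<^bsub>FA n\<^esub> g \<otimes>\<^bsub>FA n\<^esub> h"
proof
  fix w :: "nat list"
  have fc: "\<And>w. f w \<in> carrier R" and gc: "\<And>w. g w \<in> carrier R" and hc: "\<And>w. h w \<in> carrier R"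
    using f g h by (auto simp: fa_carrier)
  have "((f \<oplus>\<^bsub>FA n\<^esub> g) \<otimes>\<^bsub>FA n\<^esub> h) w = (\<Oplus>i\<in>{..length w}. f (take i w) \<otimes> h (drop i w) \<oplus> g (take i w) \<otimes> h (drop i w))"
    unfolding fa_mult fa_add by (intro finsum_cong) (auto simp: fc gc hc l_distr)
  also have "\<dots> = (f \<otimes>\<^bsub>FA n\<^esub> h \<oplus>\<^bsub>FA n\<^esub> g \<otimes>\<^bsub>FA n\<^esub> h) w"
    unfolding fa_mult fa_add by (rule finsum_addf) (auto simp: fc gc hc)
  finally show "((f \<oplus>\<^bsub>FA n\<^esub> g) \<otimes>\<^bsub>FA n\<^esub> h) w = (f \<otimes>\<^bsub>FA n\<^esub> h \<oplus>\<^bsub>FA n\<^esub> g \<otimes>\<^bsub>FA n\<^esub> h) w" .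
qed

lemma fa_r_distr:
  assumes f: "f \<in> carrier (FA n)" and g: "g \<in> carrier (FA n)" and h: "h \<in> carrier (FA n)"
  shows "h \<otimes>\<^bsub>FA n\<^esub> (f \<oplus>\<^bsub>FA n\<^esub> g) = h \<otimes>\<^bsub>FA n\<^esub> f \<oplus>\<^bsub>FA n\<^esub> h \<otimes>\<^bsub>FA n\<^esub> g"
proof
  fix w :: "nat list"
  have fc: "\<And>w. f w \<in> carrier R" and gc: "\<And>w. g w \<in> carrier R" and hc: "\<And>w. h w \<in> carrier R"
    using f g h by (auto simp: fa_carrier)
  have "(h \<otimes>\<^bsub>FA n\<^esub> (f \<oplus>\<^bsub>FA n\<^esub> g)) w = (\<Oplus>i\<in>{..length w}. h (take i w) \<otimes> f (drop i w) \<oplus> h (take i w) \<otimes> g (drop i w))"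
    unfolding fa_mult fa_add by (intro finsum_cong) (auto simp: fc gc hc r_distr)
  also have "\<dots> = (h \<otimes>\<^bsub>FA n\<^esub> f \<oplus>\<^bsub>FA n\<^esub> h \<otimes>\<^bsub>FA n\<^esub> g) w"
    unfolding fa_mult fa_add by (rule finsum_addf) (auto simp: fc gc hc)
  finally show "(h \<otimes>\<^bsub>FA n\<^esub> (f \<oplus>\<^bsub>FA n\<^esub> g)) w = (h \<otimes>\<^bsub>FA n\<^esub> f \<oplus>\<^bsub>FA n\<^esub> h \<otimes>\<^bsub>FA n\<^esub> g) w" .
qed

lemma fa_ring: "ring (FA n)"
proof (rule ringI)
  show "abelian_group (FA n)"
  proof (rule abelian_groupI)
    fix x y z assume x: "x \<in> carrier (FA n)" and y: "y \<in> carrier (FA n)" and z: "z \<in> carrier (FA n)"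
    show "x \<oplus>\<^bsub>FA n\<^esub> y \<oplus>\<^bsub>FA n\<^esub> z = x \<oplus>\<^bsub>FA n\<^esub> (y \<oplus>\<^bsub>FA n\<^esub> z)"
      using x y z by (auto simp: fa_add fa_carrier a_assoc)
  next
    fix x y assume x: "x \<in> carrier (FA n)" and y: "y \<in> carrier (FA n)"
    show "x \<oplus>\<^bsub>FA n\<^esub> y = y \<oplus>\<^bsub>FA n\<^esub> x"
      using x y by (auto simp: fa_add fa_carrier a_comm)
  next
    fix x assume x: "x \<in> carrier (FA n)"
    show "\<zero>\<^bsub>FA n\<^esub> \<oplus>\<^bsub>FA n\<^esub> x = x"
      using x by (auto simp: fa_add fa_zero fa_carrier)
    show "\<exists>y\<in>carrier (FA n). y \<oplus>\<^bsub>FA n\<^esub> x = \<zero>\<^bsub>FA n\<^esub>"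
      using x fa_neg_closed[OF x] by (intro bexI[of _ "\<lambda>w. \<ominus> x w"]) (auto simp: fa_add fa_zero fa_carrier l_neg)
  qed (auto intro: fa_add_closed fa_zero_closed)
next
  show "monoid (FA n)"
    by (rule monoidI) (auto intro: fa_mult_closed fa_one_closed fa_mult_assoc fa_l_one fa_r_one)
qed (auto intro: fa_l_distr fa_r_distr)

end


lemma img_ideal:
  assumes F: "ring F" and R: "ring R" and Phi: "\<Phi> \<in> ring_hom F R" "\<Phi> ` carrier F = carrier R"
    and N: "ideal N F"
  shows "left_ideal (\<Phi> ` N) R \<and> right_ideal (\<Phi> ` N) R"
proof -
  interpret h: ring_hom_ring F R \<Phi> using ring_hom_ringI2[OF F R Phi(1)] .
  interpret N: ideal N F by (rule N)
  have as: "additive_subgroup (\<Phi> ` N) R"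
    by (rule additive_subgroup.intro, rule h.img_is_add_subgroup, rule N.a_subgroup)
  have l: "r \<otimes>\<^bsub>R\<^esub> x \<in> \<Phi> ` N" if r: "r \<in> carrier R" and x: "x \<in> \<Phi> ` N" for r x
  proof -
    obtain a where a: "a \<in> carrier F" "r = \<Phi> a" using r Phi(2) by blast
    obtain b where b: "b \<in> N" "x = \<Phi> b" using x by blast
    have "b \<in> carrier F" using b N.Icarr by blast
    then have "r \<otimes>\<^bsub>R\<^esub> x = \<Phi> (a \<otimes>\<^bsub>F\<^esub> b)" using a b by simp
    moreover have "a \<otimes>\<^bsub>F\<^esub> b \<in> N" using a b N.I_l_closed by blast
    ultimately show ?thesis by blast
  qed
  have r: "x \<otimes>\<^bsub>R\<^esub> r \<in> \<Phi> ` N" if r: "r \<in> carrier R" and x: "x \<in> \<Phi> ` N" for r x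
  proof -
    obtain a where a: "a \<in> carrier F" "r = \<Phi> a" using r Phi(2) by blast
    obtain b where b: "b \<in> N" "x = \<Phi> b" using x by blast
    have "b \<in> carrier F" using b N.Icarr by blast
    then have "x \<otimes>\<^bsub>R\<^esub> r = \<Phi> (b \<otimes>\<^bsub>F\<^esub> a)" using a b by simp
    moreover have "b \<otimes>\<^bsub>F\<^esub> a \<in> N" using a b N.I_r_closed by blast
    ultimately show ?thesis by blast
  qed
  show ?thesis unfolding left_ideal_def right_ideal_def using as l r by blast
qed

lemma acc_any:
  assumes "left_noetherian R \<or> right_noetherian R"
    and "\<And>k. left_ideal (I k) R \<and> right_ideal (I k) R" and "\<And>k. I k \<subseteq> I (Suc k)"
  shows "\<exists>N. \<forall>k\<ge>N. I k = I N"
  using assms unfolding left_noetherian_def right_noetherian_def by blast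

lemma main_ker:
  fixes F :: "('a,'b) ring_scheme" and R :: "('c,'d) ring_scheme" and S :: "('e,'f) ring_scheme"
  assumes F: "ring F" and R: "ring R" and S: "ring S"
   and Phi: "\<Phi> \<in> ring_hom F R" "\<Phi> ` carrier F = carrier R"
   and ker: "a_kernel F R \<Phi> = genideal F Rel" and Rel: "Rel \<subseteq> carrier F"
   and noeth: "left_noetherian R \<or> right_noetherian R"
   and g: "g \<in> ring_hom R S"
  shows "\<exists>E. finite E \<and> E \<subseteq> carrier F \<and> a_kernel F S (g \<circ> \<Phi>) = genideal F (Rel \<union> E)"
proof (rule ccontr)
  assume H: "\<not> ?thesis"
  interpret F: ring F by (rule F)
  interpret R: ring R by (rule R)
  interpret S: ring S by (rule S)
  interpret hP: ring_hom_ring F R \<Phi> using ring_hom_ringI2[OF F R Phi(1)] .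
  interpret hg: ring_hom_ring R S g using ring_hom_ringI2[OF R S g] .
  have psi: "g \<circ> \<Phi> \<in> ring_hom F S" using ring_hom_trans[OF Phi(1) g] .
  interpret hpsi: ring_hom_ring F S "g \<circ> \<Phi>" using ring_hom_ringI2[OF F S psi] .
  define K where "K = a_kernel F S (g \<circ> \<Phi>)"
  have Kid: "ideal K F" unfolding K_def by (rule hpsi.kernel_is_ideal)
  have Kc: "K \<subseteq> carrier F" using ideal.Icarr[OF Kid] by blast
  have RelK: "Rel \<subseteq> K"
  proof
    fix x assume "x \<in> Rel"
    then have "x \<in> a_kernel F R \<Phi>" using ker F.genideal_self[OF Rel] by blast
    then show "x \<in> K" unfolding K_def a_kernel_def' by auto
  qed
  define G where "G = (\<lambda>E. genideal F (Rel \<union> E))"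
  have GK: "G E \<subseteq> K" if "E \<subseteq> K" for E
    unfolding G_def using that RelK by (intro F.genideal_minimal[OF Kid]) auto
  have Gid: "ideal (G E) F" if "E \<subseteq> K" for E
    unfolding G_def using that RelK Kc by (intro F.genideal_ideal) auto
  have ex: "\<exists>x. x \<in> K \<and> x \<notin> G E" if "finite E" "E \<subseteq> K" for E
  proof -
    have "K \<noteq> G E" using H that Kc unfolding K_def G_def by blast
    then show ?thesis using GK[OF that(2)] by blast
  qed
  define nx where "nx = (\<lambda>E. SOME x. x \<in> K \<and> x \<notin> G E)"
  define Es where "Es = rec_nat {} (\<lambda>_ E. insert (nx E) E)"
  have Es0: "Es 0 = {}" and EsS: "\<And>k. Es (Suc k) = insert (nx (Es k)) (Es k)"
    unfolding Es_def by simp_all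
  have nxp: "nx E \<in> K \<and> nx E \<notin> G E" if "finite E" "E \<subseteq> K" for E
    unfolding nx_def using someI_ex[OF ex[OF that]] .
  have Esok: "finite (Es k) \<and> Es k \<subseteq> K" for k
    by (induct k) (auto simp: Es0 EsS dest: nxp)
  define J where "J = (\<lambda>k. \<Phi> ` G (Es k))"
  have Jid: "left_ideal (J k) R \<and> right_ideal (J k) R" for k
    unfolding J_def using img_ideal[OF F R Phi Gid] Esok by blast
  have Gmono: "G (Es k) \<subseteq> G (Es (Suc k))" for k
    unfolding G_def using Esok[of "Suc k"] Kc Rel
    by (intro F.subset_Idl_subset) (auto simp: EsS)
  have Jmono: "J k \<subseteq> J (Suc k)" for k unfolding J_def using Gmono by blast
  obtain N where N: "\<forall>k\<ge>N. J k = J N" using acc_any[of R J, OF noeth Jid Jmono] by blast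
  define x where "x = nx (Es N)"
  have xK: "x \<in> K" and xG: "x \<notin> G (Es N)" using nxp[of "Es N"] Esok unfolding x_def by auto
  have "x \<in> G (Es (Suc N))" unfolding G_def x_def
    using F.genideal_self[of "Rel \<union> Es (Suc N)"] Esok[of "Suc N"] Kc Rel by (auto simp: EsS)
  then have "\<Phi> x \<in> J (Suc N)" unfolding J_def by blast
  then have "\<Phi> x \<in> J N" using N by (metis le_SucI order_refl)
  then obtain y where y: "y \<in> G (Es N)" "\<Phi> x = \<Phi> y" unfolding J_def by blast
  have GNid: "ideal (G (Es N)) F" using Gid Esok by blast
  have yc: "y \<in> carrier F" using ideal.Icarr[OF GNid y(1)] .
  have xc: "x \<in> carrier F" using xK Kc by blast
  have "x \<ominus>\<^bsub>F\<^esub> y \<in> a_kernel F R \<Phi>"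
    unfolding a_kernel_def' using xc yc y(2) by (simp add: F.minus_eq R.minus_eq R.r_neg)
  moreover have "genideal F Rel \<subseteq> G (Es N)" unfolding G_def
    using Esok[of N] Kc Rel by (intro F.subset_Idl_subset) auto
  ultimately have "x \<ominus>\<^bsub>F\<^esub> y \<in> G (Es N)" using ker by blast
  then have "(x \<ominus>\<^bsub>F\<^esub> y) \<oplus>\<^bsub>F\<^esub> y \<in> G (Es N)"
    using y(1) GNid by (meson additive_subgroup.a_closed ideal.axioms(1))
  moreover have "(x \<ominus>\<^bsub>F\<^esub> y) \<oplus>\<^bsub>F\<^esub> y = x" using xc yc by (simp add: F.minus_eq F.add.m_assoc F.l_neg)
  ultimately show False using xG by simp
qed



lemma quot_carrier: "carrier (F Quot I) = (\<Union>a\<in>carrier F. {I +>\<^bsub>F\<^esub> a})"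
  by (simp add: FactRing_def A_RCOSETS_def')

lemma reduce:
  fixes K :: "('k,'m) ring_scheme" and A :: "('e,'f) ring_scheme" and B :: "('g,'h) ring_scheme"
  assumes K: "ring K" and A: "ring A" and B: "ring B"
   and Rel: "Rel \<subseteq> carrier (free_alg K n)"
   and h: "h \<in> ring_iso A (free_alg K n Quot genideal (free_alg K n) Rel)"
   and noeth: "left_noetherian A \<or> right_noetherian A"
   and g: "g \<in> ring_hom A B" "g ` carrier A = carrier B"
  shows "\<exists>E. finite E \<and> E \<subseteq> carrier (free_alg K n) \<and>
     (\<exists>h' \<in> ring_iso B (free_alg K n Quot genideal (free_alg K n) (Rel \<union> E)).
        \<forall>x \<in> carrier A. \<forall>f \<in> carrier (free_alg K n). h x = genideal (free_alg K n) Rel +>\<^bsub>free_alg K n\<^esub> f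
          \<longrightarrow> h' (g x) = genideal (free_alg K n) (Rel \<union> E) +>\<^bsub>free_alg K n\<^esub> f)"
proof -
  define F where "F = free_alg K n"
  have F: "ring F" unfolding F_def by (rule ring.fa_ring[OF K])
  interpret F: ring F by (rule F)
  interpret A: ring A by (rule A)
  interpret B: ring B by (rule B)
  define I where "I = genideal F Rel"
  have Iid: "ideal I F" unfolding I_def using Rel F_def by (intro F.genideal_ideal) auto
  interpret I: ideal I F by (rule Iid)
  have FQ: "ring (F Quot I)" by (rule I.quotient_is_ring)
  have h': "h \<in> ring_iso A (F Quot I)" using h unfolding F_def I_def .
  define hinv where "hinv = inv_into (carrier A) h"
  have hinv: "hinv \<in> ring_iso (F Quot I) A" unfolding hinv_def by (rule ring_iso_set_sym[OF A h'])
  have hbij: "bij_betw h (carrier A) (carrier (F Quot I))" using h' by (simp add: ring_iso_def)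
  have hinvbij: "bij_betw hinv (carrier (F Quot I)) (carrier A)" using hinv by (simp add: ring_iso_def)
  define \<Phi> where "\<Phi> = hinv \<circ> (\<lambda>x. I +>\<^bsub>F\<^esub> x)"
  have Phi: "\<Phi> \<in> ring_hom F A" unfolding \<Phi>_def
    using ring_hom_trans[OF I.rcos_ring_hom, of hinv A] hinv by (simp add: ring_iso_def)
  have pisurj: "(\<lambda>x. I +>\<^bsub>F\<^esub> x) ` carrier F = carrier (F Quot I)"
    unfolding quot_carrier by blast
  have Phisurj: "\<Phi> ` carrier F = carrier A" unfolding \<Phi>_def image_comp[symmetric] pisurj
    using hinvbij by (simp add: bij_betw_def)
  have hinv0: "hinv I = \<zero>\<^bsub>A\<^esub>"
    using ring_hom_zero[OF _ FQ A] hinv by (simp add: ring_iso_def FactRing_def)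
  have I0: "\<zero>\<^bsub>F\<^esub> \<in> I" by (rule additive_subgroup.zero_closed[OF I.additive_subgroup_axioms])
  have Icar: "I \<in> carrier (F Quot I)" using I.a_rcos_const[OF I0] unfolding quot_carrier by force
  have ker: "a_kernel F A \<Phi> = I"
  proof (rule Set.set_eqI, rule iffI)
    fix x assume x: "x \<in> a_kernel F A \<Phi>"
    then have xc: "x \<in> carrier F" and "hinv (I +>\<^bsub>F\<^esub> x) = hinv I"
      unfolding a_kernel_def' \<Phi>_def using hinv0 by auto
    moreover have "I +>\<^bsub>F\<^esub> x \<in> carrier (F Quot I)" using pisurj xc by blast
    ultimately have "I +>\<^bsub>F\<^esub> x = I" using hinvbij Icar by (metis bij_betw_inv_into_left bij_betw_def inj_on_def)
    then show "x \<in> I" using I.a_rcos_self[OF xc] by simp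
  next
    fix x assume x: "x \<in> I"
    then have "x \<in> carrier F" by (rule I.Icarr)
    then show "x \<in> a_kernel F A \<Phi>" unfolding a_kernel_def' \<Phi>_def using hinv0 I.a_rcos_const[OF x] by simp
  qed
  obtain E where E: "finite E" "E \<subseteq> carrier F" and kerE: "a_kernel F B (g \<circ> \<Phi>) = genideal F (Rel \<union> E)"
    using main_ker[OF F A B Phi Phisurj ker[unfolded I_def] Rel[folded F_def] noeth g(1)] by blast
  define \<psi> where "\<psi> = g \<circ> \<Phi>"
  have psi: "\<psi> \<in> ring_hom F B" unfolding \<psi>_def by (rule ring_hom_trans[OF Phi g(1)])
  interpret hpsi: ring_hom_ring F B \<psi> using ring_hom_ringI2[OF F B psi] .
  have psisurj: "\<psi> ` carrier F = carrier B" unfolding \<psi>_def image_comp[symmetric] Phisurj g(2) ..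
  define K' where "K' = a_kernel F B \<psi>"
  have K'eq: "K' = genideal F (Rel \<union> E)" unfolding K'_def \<psi>_def kerE ..
  define \<theta> where "\<theta> = (\<lambda>X. the_elem (\<psi> ` X))"
  have theta: "\<theta> \<in> ring_iso (F Quot K') B" unfolding \<theta>_def K'_def by (rule hpsi.FactRing_iso_set[OF psisurj])
  have FQ': "ring (F Quot K')" unfolding K'_def by (rule ideal.quotient_is_ring[OF hpsi.kernel_is_ideal])
  define h2 where "h2 = inv_into (carrier (F Quot K')) \<theta>"
  have h2: "h2 \<in> ring_iso B (F Quot K')" unfolding h2_def by (rule ring_iso_set_sym[OF FQ' theta])
  have thetainj: "inj_on \<theta> (carrier (F Quot K'))" using theta by (simp add: ring_iso_def bij_betw_def)
  have hprop: "h2 (g x) = K' +>\<^bsub>F\<^esub> f" if x: "x \<in> carrier A" and f: "f \<in> carrier F" and hx: "h x = I +>\<^bsub>F\<^esub> f" for x f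
  proof -
    have "\<Phi> f = hinv (h x)" unfolding \<Phi>_def using hx by simp
    also have "\<dots> = x" unfolding hinv_def using hbij x by (simp add: bij_betw_def)
    finally have "\<psi> f = g x" unfolding \<psi>_def by simp
    then have "\<theta> (K' +>\<^bsub>F\<^esub> f) = g x" unfolding \<theta>_def K'_def using hpsi.the_elem_simp[OF f] by simp
    moreover have "K' +>\<^bsub>F\<^esub> f \<in> carrier (F Quot K')" using f unfolding quot_carrier by blast
    ultimately show ?thesis unfolding h2_def using thetainj by (metis inv_into_f_f)
  qed
  have P: "\<forall>x\<in>carrier A. \<forall>f\<in>carrier F. h x = genideal F Rel +>\<^bsub>F\<^esub> f
          \<longrightarrow> h2 (g x) = genideal F (Rel \<union> E) +>\<^bsub>F\<^esub> f"
    using hprop unfolding K'eq I_def by blast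
  have "finite E \<and> E \<subseteq> carrier F \<and> (\<exists>h'\<in>ring_iso B (F Quot genideal F (Rel \<union> E)).
      \<forall>x\<in>carrier A. \<forall>f\<in>carrier F. h x = genideal F Rel +>\<^bsub>F\<^esub> f
          \<longrightarrow> h' (g x) = genideal F (Rel \<union> E) +>\<^bsub>F\<^esub> f)"
  proof (intro conjI)
    show "\<exists>h'\<in>ring_iso B (F Quot genideal F (Rel \<union> E)).
      \<forall>x\<in>carrier A. \<forall>f\<in>carrier F. h x = genideal F Rel +>\<^bsub>F\<^esub> f
          \<longrightarrow> h' (g x) = genideal F (Rel \<union> E) +>\<^bsub>F\<^esub> f"
      by (rule bexI[of _ h2]) (rule P, rule h2[unfolded K'eq])
  qed (rule E(1), rule E(2))
  then show ?thesis unfolding F_def by (rule exI)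
qed



lemma (in ring) free_const_closed: "c \<in> carrier R \<Longrightarrow> free_const R c \<in> carrier (FA n)"
proof -
  assume c: "c \<in> carrier R"
  have "{w. (if w = [] then c else \<zero>) \<noteq> \<zero>} \<subseteq> {[]}" by auto
  then show ?thesis unfolding free_const_def fa_carrier using c by (auto intro: finite_subset)
qed

lemma ring_Z: "ring \<Z>" using int_is_cring by (simp add: cring.axioms(1))

theorem lemma4p2:
  shows "(\<forall>(R :: ('a, 'b) ring_scheme) (S :: ('c, 'd) ring_scheme) g.
            ring R \<and> (left_noetherian R \<or> right_noetherian R) \<and> fp_ring R \<and>
            ring S \<and> g \<in> ring_hom R S \<and> g ` carrier R = carrier S
            \<longrightarrow> fp_ring S)
       \<and> (\<forall>(K :: ('k, 'm) ring_scheme) (A :: ('e, 'f) ring_scheme) \<iota> (B :: ('g, 'h) ring_scheme) g.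
            is_algebra K A \<iota> \<and> (left_noetherian A \<or> right_noetherian A) \<and> fp_alg K A \<iota> \<and>
            ring B \<and> g \<in> ring_hom A B \<and> g ` carrier A = carrier B
            \<longrightarrow> fp_alg K B (g \<circ> \<iota>))"
proof (intro conjI allI impI)
  fix R :: "('a, 'b) ring_scheme" and S :: "('c, 'd) ring_scheme" and g
  assume H: "ring R \<and> (left_noetherian R \<or> right_noetherian R) \<and> fp_ring R \<and>
            ring S \<and> g \<in> ring_hom R S \<and> g ` carrier R = carrier S"
  then obtain n Rel where Rel: "finite Rel" "Rel \<subseteq> carrier (free_alg \<Z> n)"
      and iso: "R \<simeq> (free_alg \<Z> n Quot genideal (free_alg \<Z> n) Rel)"
    unfolding fp_ring_def by blast
  obtain h where h: "h \<in> ring_iso R (free_alg \<Z> n Quot genideal (free_alg \<Z> n) Rel)"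
    using iso unfolding is_ring_iso_def by blast
  obtain E h' where E: "finite E" "E \<subseteq> carrier (free_alg \<Z> n)"
      and h': "h' \<in> ring_iso S (free_alg \<Z> n Quot genideal (free_alg \<Z> n) (Rel \<union> E))"
    using reduce[OF ring_Z _ _ Rel(2) h, of S g] H by blast
  show "fp_ring S" unfolding fp_ring_def is_ring_iso_def
    using Rel E h' by (intro exI[of _ n] exI[of _ "Rel \<union> E"]) blast
next
  fix K :: "('k, 'm) ring_scheme" and A :: "('e, 'f) ring_scheme" and \<iota> and B :: "('g, 'h) ring_scheme" and g
  assume H: "is_algebra K A \<iota> \<and> (left_noetherian A \<or> right_noetherian A) \<and> fp_alg K A \<iota> \<and>
            ring B \<and> g \<in> ring_hom A B \<and> g ` carrier A = carrier B"
  have K: "ring K" and A: "ring A" and iota: "\<iota> \<in> ring_hom K A"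
    using H unfolding is_algebra_def by (auto simp: cring.axioms(1))
  obtain n Rel h where Rel: "finite Rel" "Rel \<subseteq> carrier (free_alg K n)"
      and h: "h \<in> ring_iso A (free_alg K n Quot genideal (free_alg K n) Rel)"
      and hc: "\<forall>c \<in> carrier K. h (\<iota> c) = genideal (free_alg K n) Rel +>\<^bsub>free_alg K n\<^esub> free_const K c"
    using H unfolding fp_alg_def by blast
  obtain E h' where E: "finite E" "E \<subseteq> carrier (free_alg K n)"
      and h': "h' \<in> ring_iso B (free_alg K n Quot genideal (free_alg K n) (Rel \<union> E))"
      and P: "\<forall>x \<in> carrier A. \<forall>f \<in> carrier (free_alg K n). h x = genideal (free_alg K n) Rel +>\<^bsub>free_alg K n\<^esub> f
          \<longrightarrow> h' (g x) = genideal (free_alg K n) (Rel \<union> E) +>\<^bsub>free_alg K n\<^esub> f"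
    using reduce[OF K A _ Rel(2) h, of B g] H by blast
  have "\<forall>c \<in> carrier K. h' ((g \<circ> \<iota>) c) = genideal (free_alg K n) (Rel \<union> E) +>\<^bsub>free_alg K n\<^esub> free_const K c"
  proof
    fix c assume c: "c \<in> carrier K"
    have "\<iota> c \<in> carrier A" using iota c by (rule ring_hom_closed)
    moreover have "free_const K c \<in> carrier (free_alg K n)" using ring.free_const_closed[OF K c] .
    ultimately show "h' ((g \<circ> \<iota>) c) = genideal (free_alg K n) (Rel \<union> E) +>\<^bsub>free_alg K n\<^esub> free_const K c"
      using P hc c by simp
  qed
  then show "fp_alg K B (g \<circ> \<iota>)" unfolding fp_alg_def
    using Rel E h' by (intro exI[of _ n] exI[of _ "Rel \<union> E"]) blast
qed


end
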